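(* Let $d,n\in\mathbb{N}$ be such that $h_c=h_c(d,n)$ is finite. For every $\epsilon\in(0,1]$ there exists $\gamma>0$ depending only on $\epsilon,d,n$ such that the following holds. Let $B$ be an axis-parallel box in $\mathbb{R}^d$ and $S$ a set of $m\ge h_c$ points in $\mathbb{R}^d$ such that at least $\epsilon m$ points of $S$ cannot be covered by any $n$ translated copies of $B$. Let $0<\delta\le 1$. If one independently samples $\frac{1}{\gamma}\ln\frac{1}{\delta}$ sets, each a uniformly random $h_c$-element subset of $S$, then with probability at least $1-\delta$ some sampled set cannot be covered by any $n$ translated copies of $B$.
   Context: An axis-parallel box in $\mathbb{R}^d$ is a set $[\alpha_1,\beta_1]\times\dots\times[\alpha_d,\beta_d]$. "At least $\epsilon m$ points of $S$ cannot be covered by any $n$ translated copies of $B$" means that for any $n$ translates of $B$ at least $\epsilon m$ points of $S$ lie outside their union. A family is $n$-pierceable if some set of at most $n$ points meets every member. Given families $\mathcal{F}_1,\dots,\mathcal{F}_m$, a colorful $t$-tuple is $(C_1,\dots,C_t)$ with $C_j\in\mathcal{F}_{i_j}$ for pairwise distinct $i_j$. $h_c(d,n)$ denotes the smallest positive integer $h$ such that whenever $\mathcal{F}_1,\dots,\mathcal{F}_h$ are collections of axis-parallel boxes in $\mathbb{R}^d$ with every colorful $h$-tuple $n$-pierceable, some $\mathcal{F}_i$ is $n$-pierceable. *)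

theory Defs
  imports "HOL-Analysis.Analysis" "HOL-Probability.Probability"
begin

definition is_box :: "(real ^ 'd) set \<Rightarrow> bool" where
  "is_box B \<longleftrightarrow> (\<exists>a b. (\<forall>i. a $ i \<le> b $ i) \<and> B = cbox a b)"

definition pierceable :: "nat \<Rightarrow> 'a set set \<Rightarrow> bool" where
  "pierceable n F \<longleftrightarrow> (\<exists>P. finite P \<and> card P \<le> n \<and> (\<forall>C\<in>F. P \<inter> C \<noteq> {}))"

definition hc_prop :: "'d::finite itself \<Rightarrow> nat \<Rightarrow> nat \<Rightarrow> bool" where
  "hc_prop _ n h \<longleftrightarrow>
     (\<forall>F :: nat \<Rightarrow> (real ^ 'd) set set.
        (\<forall>i<h. \<forall>C\<in>F i. is_box C) \<longrightarrow>
        (\<forall>f. (\<forall>i<h. f i \<in> F i) \<longrightarrow> pierceable n (f ` {..<h})) \<longrightarrow>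
        (\<exists>i<h. pierceable n (F i)))"

definition hc_finite :: "'d::finite itself \<Rightarrow> nat \<Rightarrow> bool" where
  "hc_finite d n \<longleftrightarrow> (\<exists>h>0. hc_prop d n h)"

definition hc :: "'d::finite itself \<Rightarrow> nat \<Rightarrow> nat" where
  "hc d n = (LEAST h. h > 0 \<and> hc_prop d n h)"

definition coverable :: "nat \<Rightarrow> (real ^ 'd) set \<Rightarrow> (real ^ 'd) set \<Rightarrow> bool" where
  "coverable n B X \<longleftrightarrow>
     (\<exists>T. finite T \<and> card T \<le> n \<and> X \<subseteq> (\<Union>t\<in>T. (\<lambda>x. t + x) ` B))"

definition subset_pmf :: "nat \<Rightarrow> 'a set \<Rightarrow> 'a set pmf" where
  "subset_pmf h S = pmf_of_set {A. A \<subseteq> S \<and> card A = h}"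

end

theory Submission
  imports Defs
begin

definition refl_box :: "(real ^ 'd) set \<Rightarrow> real ^ 'd \<Rightarrow> (real ^ 'd) set" where
  "refl_box B x = (\<lambda>b. x - b) ` B"

lemma cov_iff:
  fixes B :: "(real ^ 'd) set"
  shows "coverable n B X \<longleftrightarrow> pierceable n (refl_box B ` X)"
proof -
  have key: "x \<in> (\<lambda>x. t + x) ` B \<longleftrightarrow> t \<in> refl_box B x" for x t :: "real ^ 'd"
  proof -
    have "x \<in> (\<lambda>x. t + x) ` B \<longleftrightarrow> x - t \<in> B"
    proof
      assume "x \<in> (\<lambda>x. t + x) ` B"
      then obtain b where "b \<in> B" "x = t + b" by blast
      then show "x - t \<in> B" by simp
    next
      assume "x - t \<in> B"
      moreover have "x = t + (x - t)" by simp
      ultimately show "x \<in> (\<lambda>x. t + x) ` B" by (rule rev_image_eqI)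
    qed
    moreover have "t \<in> refl_box B x \<longleftrightarrow> x - t \<in> B"
    proof
      assume "t \<in> refl_box B x"
      then obtain b where "b \<in> B" "t = x - b" unfolding refl_box_def by blast
      then show "x - t \<in> B" by simp
    next
      assume "x - t \<in> B"
      moreover have "t = x - (x - t)" by simp
      ultimately show "t \<in> refl_box B x" unfolding refl_box_def by (rule rev_image_eqI)
    qed
    ultimately show ?thesis by simp
  qed
  have eq: "X \<subseteq> (\<Union>t\<in>T. (\<lambda>x. t + x) ` B) \<longleftrightarrow> (\<forall>C\<in>refl_box B ` X. T \<inter> C \<noteq> {})"
    for T
  proof
    assume "X \<subseteq> (\<Union>t\<in>T. (\<lambda>x. t + x) ` B)"
    then show "\<forall>C\<in>refl_box B ` X. T \<inter> C \<noteq> {}" using key by blast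
  next
    assume a: "\<forall>C\<in>refl_box B ` X. T \<inter> C \<noteq> {}"
    show "X \<subseteq> (\<Union>t\<in>T. (\<lambda>x. t + x) ` B)"
    proof
      fix x assume "x \<in> X"
      then obtain t where "t \<in> T" "t \<in> refl_box B x" using a by blast
      then show "x \<in> (\<Union>t\<in>T. (\<lambda>x. t + x) ` B)" using key by blast
    qed
  qed
  show ?thesis
    unfolding coverable_def pierceable_def eq ..
qed

lemma refl_box_is_box:
  assumes "is_box B" shows "is_box (refl_box B x)"
proof -
  obtain a b where ab: "\<forall>i. a $ i \<le> b $ i" "B = cbox a b"
    using assms unfolding is_box_def by blast
  have "a \<in> cbox a b" using ab(1) by (simp add: mem_box_cart)
  then have ne: "cbox a b \<noteq> {}" by blast
  have "refl_box B x = (\<lambda>y. (-1) *\<^sub>R y + x) ` cbox a b"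
    unfolding refl_box_def ab(2) by (simp add: algebra_simps)
  also have "\<dots> = cbox (x - b) (x - a)"
    using ne by (subst image_affinity_cbox) (simp add: algebra_simps)
  finally have "refl_box B x = cbox (x - b) (x - a)" .
  moreover have "\<forall>i. (x - b) $ i \<le> (x - a) $ i" using ab(1) by simp
  ultimately show ?thesis unfolding is_box_def by blast
qed

lemma cov_mono: "coverable n B Y \<Longrightarrow> X \<subseteq> Y \<Longrightarrow> coverable n B X"
  unfolding coverable_def by blast

lemma colorful:
  fixes B :: "(real ^ 'd::finite) set"
  assumes hp: "hc_prop TYPE('d) n h" and bx: "is_box B"
    and bad: "\<forall>i<h. \<not> coverable n B (E i)"
  shows "\<exists>x. (\<forall>i<h. x i \<in> E i) \<and> \<not> coverable n B (x ` {..<h})"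
proof -
  define F where "F = (\<lambda>i. refl_box B ` E i)"
  have boxes: "\<forall>i<h. \<forall>C\<in>F i. is_box C" using bx refl_box_is_box unfolding F_def by blast
  have np: "\<not> (\<exists>i<h. pierceable n (F i))" using bad cov_iff unfolding F_def by blast
  from hp boxes np obtain f where f: "\<forall>i<h. f i \<in> F i" "\<not> pierceable n (f ` {..<h})"
    unfolding hc_prop_def by blast
  have "\<forall>i<h. \<exists>y. y \<in> E i \<and> f i = refl_box B y" using f(1) unfolding F_def by blast
  then have "\<forall>i. \<exists>y. i < h \<longrightarrow> y \<in> E i \<and> f i = refl_box B y" by blast
  from choice[OF this] obtain x where x: "\<forall>i<h. x i \<in> E i \<and> f i = refl_box B (x i)" by blast
  have "f ` {..<h} = refl_box B ` (x ` {..<h})" using x by force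
  then have "\<not> pierceable n (refl_box B ` (x ` {..<h}))" using f(2) by simp
  then have "\<not> coverable n B (x ` {..<h})" by (simp add: cov_iff)
  then show ?thesis using x by blast
qed

lemma helly:
  fixes B :: "(real ^ 'd::finite) set"
  assumes hp: "hc_prop TYPE('d) n h" and bx: "is_box B" and nc: "\<not> coverable n B X"
  shows "\<exists>Y\<subseteq>X. finite Y \<and> card Y \<le> h \<and> \<not> coverable n B Y"
proof -
  from colorful[OF hp bx, of "\<lambda>_. X"] nc obtain x where
    x: "\<forall>i<h. x i \<in> X" "\<not> coverable n B (x ` {..<h})" by blast
  show ?thesis
    by (rule exI[of _ "x ` {..<h}"]) (use x card_image_le[of "{..<h}" x] in auto)
qed

lemma disjoint_bad:
  fixes B :: "(real ^ 'd::finite) set"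
  assumes hp: "hc_prop TYPE('d) n h" and bx: "is_box B" and fin: "finite S"
    and far: "\<forall>X\<subseteq>S. coverable n B X \<longrightarrow> real (card X) \<le> (1 - \<epsilon>) * real (card S)"
  shows "(\<forall>j<r. real (j * h) < \<epsilon> * real (card S)) \<Longrightarrow>
    \<exists>D. (\<forall>i<r. D i \<subseteq> S \<and> card (D i) \<le> h \<and> \<not> coverable n B (D i)) \<and>
        (\<forall>i<r. \<forall>j<r. i \<noteq> j \<longrightarrow> D i \<inter> D j = {})"
proof (induction r)
  case 0
  then show ?case by auto
next
  case (Suc r)
  then obtain D where D: "\<forall>i<r. D i \<subseteq> S \<and> card (D i) \<le> h \<and> \<not> coverable n B (D i)"
    "\<forall>i<r. \<forall>j<r. i \<noteq> j \<longrightarrow> D i \<inter> D j = {}" by auto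
  define U where "U = (\<Union>i<r. D i)"
  have "card U \<le> (\<Sum>i<r. card (D i))" unfolding U_def by (rule card_UN_le) simp
  also have "\<dots> \<le> (\<Sum>i<r. h)" using D(1) by (intro sum_mono) auto
  finally have cU: "card U \<le> r * h" by simp
  have US: "U \<subseteq> S" using D(1) unfolding U_def by auto
  have "card (S - U) = card S - card U" by (rule card_Diff_subset[OF finite_subset[OF US fin] US])
  moreover have "card U \<le> card S" by (rule card_mono[OF fin US])
  ultimately have "real (card (S - U)) = real (card S) - real (card U)" by simp
  moreover have "real (r * h) < \<epsilon> * real (card S)" using Suc.prems by simp
  moreover have "real (card U) \<le> real (r * h)" using cU by (simp only: of_nat_le_iff)
  moreover have "(1 - \<epsilon>) * real (card S) = real (card S) - \<epsilon> * real (card S)"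
    by (simp add: left_diff_distrib)
  ultimately have gt: "real (card (S - U)) > (1 - \<epsilon>) * real (card S)"
    by linarith
  have "\<not> coverable n B (S - U)"
  proof
    assume "coverable n B (S - U)"
    then have "real (card (S - U)) \<le> (1 - \<epsilon>) * real (card S)" using far by blast
    then show False using gt by linarith
  qed
  from helly[OF hp bx this] obtain Y where Y: "Y \<subseteq> S - U" "card Y \<le> h" "\<not> coverable n B Y"
    by blast
  have A: "\<forall>i<Suc r. (D(r := Y)) i \<subseteq> S \<and> card ((D(r := Y)) i) \<le> h \<and> \<not> coverable n B ((D(r := Y)) i)"
  proof (intro allI impI)
    fix i assume "i < Suc r"
    then show "(D(r := Y)) i \<subseteq> S \<and> card ((D(r := Y)) i) \<le> h \<and> \<not> coverable n B ((D(r := Y)) i)"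
      using D(1) Y by (cases "i = r") auto
  qed
  have B: "\<forall>i<Suc r. \<forall>j<Suc r. i \<noteq> j \<longrightarrow> (D(r := Y)) i \<inter> (D(r := Y)) j = {}"
  proof (intro allI impI)
    fix i j assume "i < Suc r" "j < Suc r" "i \<noteq> j"
    then show "(D(r := Y)) i \<inter> (D(r := Y)) j = {}"
      using D(2) Y(1) unfolding U_def
      by (cases "i = r"; cases "j = r") auto
  qed
  show ?case by (intro exI[of _ "D(r := Y)"] conjI A B)
qed

lemma extend_bad:
  assumes "finite S" "Y \<subseteq> S" "card Y \<le> h" "h \<le> card S"
  shows "\<exists>Z. Y \<subseteq> Z \<and> Z \<subseteq> S \<and> card Z = h"
proof -
  have fY: "finite Y" using assms finite_subset by blast
  have "card (S - Y) = card S - card Y" using assms fY card_Diff_subset by blast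
  then have "h - card Y \<le> card (S - Y)" using assms by simp
  then obtain T where T: "T \<subseteq> S - Y" "card T = h - card Y" "finite T"
    by (rule obtain_subset_with_card_n)
  have "card (Y \<union> T) = card Y + card T" using T fY by (subst card_Un_disjoint) auto
  then show ?thesis using T assms by (intro exI[of _ "Y \<union> T"]) auto
qed

lemma count_bad:
  fixes B :: "(real ^ 'd::finite) set"
  assumes hp: "hc_prop TYPE('d) n h" and bx: "is_box B" and fin: "finite S"
    and D: "\<forall>i<r. D i \<subseteq> S \<and> card (D i) \<le> h \<and> \<not> coverable n B (D i)"
    "\<forall>i<r. \<forall>j<r. i \<noteq> j \<longrightarrow> D i \<inter> D j = {}"
  shows "r choose h \<le> card {A. A \<subseteq> S \<and> card A = h \<and> \<not> coverable n B A}"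
proof -
  define Bad where "Bad = {A. A \<subseteq> S \<and> card A = h \<and> \<not> coverable n B A}"
  define JJ where "JJ = {J. J \<subseteq> {..<r} \<and> card J = h}"
  have cJJ: "card JJ = r choose h" unfolding JJ_def using n_subsets[of "{..<r}" h] by simp
  have ex: "\<exists>X\<in>Bad. {j. j < r \<and> X \<inter> D j \<noteq> {}} = J" if J: "J \<in> JJ" for J
  proof -
    have fJ: "finite J" "card J = h" "J \<subseteq> {..<r}" using J unfolding JJ_def by (auto intro: finite_subset)
    obtain \<sigma> where \<sigma>: "bij_betw \<sigma> {0..<h} J" using ex_bij_betw_nat_finite[OF fJ(1)] fJ(2) by blast
    have sr: "\<forall>i<h. \<sigma> i \<in> J \<and> \<sigma> i < r" using \<sigma> fJ(3) bij_betwE by fastforce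
    have "\<forall>i<h. \<not> coverable n B (D (\<sigma> i))" using sr D(1) by blast
    from colorful[OF hp bx this] obtain x where x: "\<forall>i<h. x i \<in> D (\<sigma> i)"
      "\<not> coverable n B (x ` {..<h})" by blast
    have inj: "inj_on x {..<h}"
    proof (rule inj_onI)
      fix i j assume ij: "i \<in> {..<h}" "j \<in> {..<h}" "x i = x j"
      show "i = j"
      proof (rule ccontr)
        assume "i \<noteq> j"
        then have "\<sigma> i \<noteq> \<sigma> j" using \<sigma> ij unfolding bij_betw_def inj_on_def by auto
        then have "D (\<sigma> i) \<inter> D (\<sigma> j) = {}" using D(2) sr ij by auto
        then show False using x(1) ij by auto
      qed
    qed
    have XS: "x ` {..<h} \<subseteq> S" using x(1) sr D(1) by blast
    have XB: "x ` {..<h} \<in> Bad" unfolding Bad_def using XS x(2) card_image[OF inj] by simp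
    have "{j. j < r \<and> x ` {..<h} \<inter> D j \<noteq> {}} = J"
    proof (intro equalityI subsetI)
      fix j assume "j \<in> {j. j < r \<and> x ` {..<h} \<inter> D j \<noteq> {}}"
      then obtain i where i: "i < h" "x i \<in> D j" "j < r" by auto
      have "D (\<sigma> i) \<inter> D j \<noteq> {}" using i x(1) by auto
      then have "\<sigma> i = j" using D(2) sr i by blast
      then show "j \<in> J" using sr i by auto
    next
      fix j assume "j \<in> J"
      then obtain i where i: "i < h" "\<sigma> i = j" using \<sigma> unfolding bij_betw_def by auto
      then show "j \<in> {j. j < r \<and> x ` {..<h} \<inter> D j \<noteq> {}}" using x(1) sr by blast
    qed
    then show ?thesis using XB by blast
  qed
  then have "\<forall>J\<in>JJ. \<exists>X. X \<in> Bad \<and> {j. j < r \<and> X \<inter> D j \<noteq> {}} = J" by blast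
  from bchoice[OF this] obtain \<Phi> where
    \<Phi>: "\<forall>J\<in>JJ. \<Phi> J \<in> Bad \<and> {j. j < r \<and> \<Phi> J \<inter> D j \<noteq> {}} = J" by blast
  have "inj_on \<Phi> JJ"
  proof (rule inj_onI)
    fix J1 J2 assume J: "J1 \<in> JJ" "J2 \<in> JJ" "\<Phi> J1 = \<Phi> J2"
    have "J1 = {j. j < r \<and> \<Phi> J1 \<inter> D j \<noteq> {}}" using \<Phi> J(1) by simp
    also have "\<dots> = {j. j < r \<and> \<Phi> J2 \<inter> D j \<noteq> {}}" using J(3) by simp
    also have "\<dots> = J2" using \<Phi> J(2) by simp
    finally show "J1 = J2" .
  qed
  moreover have "\<Phi> ` JJ \<subseteq> Bad" using \<Phi> by blast
  moreover have "finite Bad" unfolding Bad_def using fin by (auto intro: finite_subset[of _ "Pow S"])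
  ultimately have "card JJ \<le> card Bad" by (rule card_inj_on_le)
  then show ?thesis using cJJ unfolding Bad_def by simp
qed

definition gam :: "real \<Rightarrow> nat \<Rightarrow> real" where
  "gam \<epsilon> h = min ((\<epsilon> / real h ^ 2) ^ h) (1 / 2 ^ nat \<lceil>real h ^ 2 / \<epsilon>\<rceil>)"

lemma gam_pos: "0 < \<epsilon> \<Longrightarrow> 0 < h \<Longrightarrow> 0 < gam \<epsilon> h"
  unfolding gam_def by simp

lemma prob_bad:
  fixes B :: "(real ^ 'd::finite) set"
  assumes hp: "hc_prop TYPE('d) n h" and bx: "is_box B" and fin: "finite S"
    and eps: "0 < \<epsilon>" "\<epsilon> \<le> 1" and hpos: "0 < h" and hS: "h \<le> card S"
    and far0: "\<forall>T. finite T \<and> card T \<le> n \<longrightarrow>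
              real (card (S - (\<Union>t\<in>T. (\<lambda>x. t + x) ` B))) \<ge> \<epsilon> * real (card S)"
  shows "measure_pmf.prob (subset_pmf h S) {A. \<not> coverable n B A} \<ge> gam \<epsilon> h"
proof -
  define m where "m = card S"
  define SS where "SS = {A. A \<subseteq> S \<and> card A = h}"
  define Bad where "Bad = {A. A \<subseteq> S \<and> card A = h \<and> \<not> coverable n B A}"
  have fSS: "finite SS" unfolding SS_def using fin by (auto intro: finite_subset[of _ "Pow S"])
  have fBad: "finite Bad" unfolding Bad_def using fin by (auto intro: finite_subset[of _ "Pow S"])
  have cSS: "card SS = m choose h" unfolding SS_def m_def using n_subsets[OF fin] by simp
  have neSS: "SS \<noteq> {}" using obtain_subset_with_card_n[OF hS] unfolding SS_def by blast
  have "measure_pmf.prob (subset_pmf h S) {A. \<not> coverable n B A} = card (SS \<inter> {A. \<not> coverable n B A}) / card SS"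
    unfolding subset_pmf_def SS_def[symmetric] using measure_pmf_of_set[OF neSS fSS] by simp
  also have "SS \<inter> {A. \<not> coverable n B A} = Bad" unfolding SS_def Bad_def by auto
  finally have P: "measure_pmf.prob (subset_pmf h S) {A. \<not> coverable n B A} = card Bad / (m choose h)"
    using cSS by simp
  have mh: "h \<le> m" using hS m_def by simp
  have cpos: "0 < m choose h" using mh by simp
  have far: "\<forall>X\<subseteq>S. coverable n B X \<longrightarrow> real (card X) \<le> (1 - \<epsilon>) * real (card S)"
  proof (intro allI impI)
    fix X assume XS: "X \<subseteq> S" and cX: "coverable n B X"
    then obtain T where T: "finite T" "card T \<le> n" "X \<subseteq> (\<Union>t\<in>T. (\<lambda>x. t + x) ` B)"
      unfolding coverable_def by blast
    define W where "W = (\<Union>t\<in>T. (\<lambda>x. t + x) ` B)"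
    have "X \<subseteq> S - (S - W)" using XS T(3) unfolding W_def by blast
    then have "card X \<le> card (S - (S - W))" using fin by (intro card_mono) auto
    also have "\<dots> = card S - card (S - W)" using fin by (intro card_Diff_subset) auto
    finally have "real (card X) \<le> real (card S) - real (card (S - W))"
      using card_mono[OF fin, of "S - W"] by auto
    moreover have "real (card (S - W)) \<ge> \<epsilon> * real (card S)" using far0 T unfolding W_def by blast
    ultimately show "real (card X) \<le> (1 - \<epsilon>) * real (card S)" by (simp add: algebra_simps)
  qed
  have ncS: "\<not> coverable n B S"
  proof
    assume "coverable n B S"
    then have "real m \<le> (1 - \<epsilon>) * real m" using far m_def by blast
    then have "\<epsilon> * real m \<le> 0" by (simp add: algebra_simps)
    moreover have "real m > 0" using mh hpos by simp
    ultimately show False using eps by (simp add: mult_le_0_iff)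
  qed
  define M where "M = nat \<lceil>real h ^ 2 / \<epsilon>\<rceil>"
  show ?thesis
  proof (cases "m < M")
    case True
    from helly[OF hp bx ncS] obtain Y where Y: "Y \<subseteq> S" "card Y \<le> h" "\<not> coverable n B Y" by blast
    from extend_bad[OF fin Y(1) Y(2) hS] obtain Z where Z: "Y \<subseteq> Z" "Z \<subseteq> S" "card Z = h" by blast
    have "Z \<in> Bad" unfolding Bad_def using Z Y(3) cov_mono by blast
    then have "card Bad > 0" using fBad card_gt_0_iff by blast
    then have "1 \<le> card Bad" by simp
    moreover have "m choose h \<le> 2 ^ M"
    proof -
      have "(2::nat) ^ m \<le> 2 ^ M" using True by (intro power_increasing) auto
      then show ?thesis using binomial_le_pow2[of m h] by linarith
    qed
    ultimately have "1 / 2 ^ M \<le> real (card Bad) / real (m choose h)"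
      using cpos by (intro frac_le) (auto simp flip: of_nat_le_iff)
    then show ?thesis unfolding P gam_def M_def by simp
  next
    case False
    have hm: "real h ^ 2 / \<epsilon> \<le> real m" using False unfolding M_def by linarith
    then have hm2: "real h ^ 2 \<le> \<epsilon> * real m" using eps by (simp add: field_simps)
    define r where "r = nat \<lceil>\<epsilon> * real m / real h\<rceil>"
    have rge: "\<epsilon> * real m / real h \<le> real r" unfolding r_def by linarith
    have "\<forall>j<r. real (j * h) < \<epsilon> * real (card S)"
    proof (intro allI impI)
      fix j assume "j < r"
      then have "int j < \<lceil>\<epsilon> * real m / real h\<rceil>" unfolding r_def by (simp add: zless_nat_eq_int_zless)
      then have "int j + 1 \<le> \<lceil>\<epsilon> * real m / real h\<rceil>" by linarith
      then have "real_of_int (int j + 1) - 1 < \<epsilon> * real m / real h"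
        by (simp only: le_ceiling_iff)
      then have a: "real j < \<epsilon> * real m / real h" by simp
      have hp: "0 < real h" using hpos by simp
      have "real j * real h < \<epsilon> * real m" using a hp by (simp add: pos_less_divide_eq)
      then show "real (j * h) < \<epsilon> * real (card S)" unfolding m_def by simp
    qed
    note DD = disjoint_bad[OF hp bx fin far this]
    obtain D where
      D: "\<forall>i<r. D i \<subseteq> S \<and> card (D i) \<le> h \<and> \<not> coverable n B (D i)"
      "\<forall>i<r. \<forall>j<r. i \<noteq> j \<longrightarrow> D i \<inter> D j = {}" using DD by blast
    have cb: "r choose h \<le> card Bad" using count_bad[OF hp bx fin D] unfolding Bad_def .
    have "real h \<le> \<epsilon> * real m / real h" using hm2 hpos by (simp add: field_simps power2_eq_square)
    then have hr: "h \<le> r" using rge by linarith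
    have q0: "0 \<le> \<epsilon> * real m / real h ^ 2" using eps by simp
    have "\<epsilon> * real m / real h ^ 2 = (\<epsilon> * real m / real h) / real h"
      by (simp add: power2_eq_square)
    also have "\<dots> \<le> real r / real h" by (rule divide_right_mono[OF rge]) simp
    finally have "\<epsilon> * real m / real h ^ 2 \<le> real r / real h" .
    then have "(\<epsilon> * real m / real h ^ 2) ^ h \<le> (real r / real h) ^ h"
      using q0 by (intro power_mono)
    also have "\<dots> \<le> real (r choose h)" using binomial_ge_n_over_k_pow_k[OF hr] by simp
    also have "\<dots> \<le> real (card Bad)" using cb by simp
    finally have num: "(\<epsilon> * real m / real h ^ 2) ^ h \<le> real (card Bad)" .
    have den: "real (m choose h) \<le> real m ^ h" using binomial_le_pow[OF mh]
      by (simp only: of_nat_le_iff flip: of_nat_power)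
    have mpos: "real m > 0" using mh hpos by simp
    have e: "\<epsilon> * real m / real h ^ 2 = (\<epsilon> / real h ^ 2) * real m" by simp
    have "(\<epsilon> / real h ^ 2) ^ h = (\<epsilon> * real m / real h ^ 2) ^ h / real m ^ h"
      using mpos unfolding e power_mult_distrib by simp
    also have "\<dots> \<le> real (card Bad) / real (m choose h)"
      by (intro frac_le num den) (use cpos in auto)
    finally show ?thesis unfolding P gam_def by simp
  qed
qed

theorem theorem12:
  fixes n :: nat
  assumes "hc_finite TYPE('d::finite) n"
  shows "\<forall>\<epsilon>::real. 0 < \<epsilon> \<and> \<epsilon> \<le> 1 \<longrightarrow>
    (\<exists>\<gamma>::real. \<gamma> > 0 \<and>
      (\<forall>(B :: (real ^ 'd) set) (S :: (real ^ 'd) set) (\<delta>::real).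
         is_box B \<longrightarrow> finite S \<longrightarrow> card S \<ge> hc TYPE('d) n \<longrightarrow>
         (\<forall>T. finite T \<and> card T \<le> n \<longrightarrow>
              real (card (S - (\<Union>t\<in>T. (\<lambda>x. t + x) ` B))) \<ge> \<epsilon> * real (card S)) \<longrightarrow>
         0 < \<delta> \<longrightarrow> \<delta> \<le> 1 \<longrightarrow>
         (let k = nat \<lceil>(1 / \<gamma>) * ln (1 / \<delta>)\<rceil> in
            measure_pmf.prob (Pi_pmf {..<k} {} (\<lambda>_. subset_pmf (hc TYPE('d) n) S))
              {g. \<exists>i<k. \<not> coverable n B (g i)} \<ge> 1 - \<delta>)))"
proof (intro allI impI)
  define h where "h = hc TYPE('d) n"
  obtain h0 where "h0 > 0 \<and> hc_prop TYPE('d) n h0" using assms unfolding hc_finite_def by blast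
  then have hh: "h > 0 \<and> hc_prop TYPE('d) n h" unfolding h_def hc_def by (rule LeastI)
  then have hpos: "h > 0" and hp: "hc_prop TYPE('d) n h" by auto
  fix \<epsilon> :: real assume eps: "0 < \<epsilon> \<and> \<epsilon> \<le> 1"
  define \<gamma> where "\<gamma> = gam \<epsilon> h"
  have gpos: "\<gamma> > 0" unfolding \<gamma>_def using gam_pos eps hpos by blast
  show "\<exists>\<gamma>::real. \<gamma> > 0 \<and>
      (\<forall>(B :: (real ^ 'd) set) (S :: (real ^ 'd) set) (\<delta>::real).
         is_box B \<longrightarrow> finite S \<longrightarrow> card S \<ge> hc TYPE('d) n \<longrightarrow>
         (\<forall>T. finite T \<and> card T \<le> n \<longrightarrow>
              real (card (S - (\<Union>t\<in>T. (\<lambda>x. t + x) ` B))) \<ge> \<epsilon> * real (card S)) \<longrightarrow>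
         0 < \<delta> \<longrightarrow> \<delta> \<le> 1 \<longrightarrow>
         (let k = nat \<lceil>(1 / \<gamma>) * ln (1 / \<delta>)\<rceil> in
            measure_pmf.prob (Pi_pmf {..<k} {} (\<lambda>_. subset_pmf (hc TYPE('d) n) S))
              {g. \<exists>i<k. \<not> coverable n B (g i)} \<ge> 1 - \<delta>))"
  proof (intro exI[of _ \<gamma>] conjI gpos allI impI)
    fix B S :: "(real ^ 'd) set" and \<delta> :: real
    assume bx: "is_box B" and fin: "finite S" and hS: "card S \<ge> hc TYPE('d) n"
      and far: "\<forall>T. finite T \<and> card T \<le> n \<longrightarrow>
              real (card (S - (\<Union>t\<in>T. (\<lambda>x. t + x) ` B))) \<ge> \<epsilon> * real (card S)"
      and d0: "0 < \<delta>" and d1: "\<delta> \<le> 1"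
    define k where "k = nat \<lceil>(1 / \<gamma>) * ln (1 / \<delta>)\<rceil>"
    define p where "p = subset_pmf h S"
    have pb: "measure_pmf.prob p {A. \<not> coverable n B A} \<ge> \<gamma>"
      unfolding p_def \<gamma>_def
      using prob_bad[OF hp bx fin _ _ hpos _ far] eps hS h_def by simp
    have "measure_pmf.prob p (UNIV - {A. \<not> coverable n B A}) = 1 - measure_pmf.prob p {A. \<not> coverable n B A}"
      using measure_pmf.prob_compl[of "{A. \<not> coverable n B A}" p] by simp
    moreover have "UNIV - {A. \<not> coverable n B A} = {A. coverable n B A}" by auto
    ultimately have Qeq: "measure_pmf.prob p {A. coverable n B A} = 1 - measure_pmf.prob p {A. \<not> coverable n B A}"
      by simp
    define Q where "Q = measure_pmf.prob p {A. coverable n B A}"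
    have Q0: "0 \<le> Q" unfolding Q_def by simp
    have Q1: "Q \<le> exp (- \<gamma>)"
    proof -
      have "Q \<le> 1 - \<gamma>" using Qeq pb unfolding Q_def by simp
      also have "\<dots> \<le> exp (- \<gamma>)" using exp_ge_add_one_self[of "- \<gamma>"] by simp
      finally show ?thesis .
    qed
    define E where "E = {g :: nat \<Rightarrow> (real ^ 'd) set. \<exists>i<k. \<not> coverable n B (g i)}"
    define PP where "PP = Pi_pmf {..<k} {} (\<lambda>_. p)"
    have "measure_pmf.prob PP (UNIV - E) = 1 - measure_pmf.prob PP E"
      using measure_pmf.prob_compl[of E PP] by simp
    moreover have "UNIV - E = Pi {..<k} (\<lambda>_. {A. coverable n B A})" unfolding E_def by auto
    moreover have "measure_pmf.prob PP (Pi {..<k} (\<lambda>_. {A. coverable n B A})) = Q ^ k"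
      unfolding PP_def Q_def by (subst measure_Pi_pmf_Pi) simp_all
    ultimately have PE: "measure_pmf.prob PP E = 1 - Q ^ k" by simp
    have "Q ^ k \<le> exp (- \<gamma>) ^ k" using Q1 Q0 by (rule power_mono)
    also have "\<dots> = exp (real k * (- \<gamma>))" by (rule exp_of_nat_mult[symmetric])
    also have "\<dots> \<le> exp (- ln (1 / \<delta>))"
    proof -
      have "(1 / \<gamma>) * ln (1 / \<delta>) \<le> real k" unfolding k_def by (rule real_nat_ceiling_ge)
      then have "ln (1 / \<delta>) / \<gamma> \<le> real k" by simp
      then have "ln (1 / \<delta>) \<le> real k * \<gamma>" using gpos by (simp add: pos_divide_le_eq)
      then show ?thesis by simp
    qed
    also have "\<dots> = \<delta>" using d0 by (simp add: ln_div)
    finally have "Q ^ k \<le> \<delta>" .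
    then have "measure_pmf.prob PP E \<ge> 1 - \<delta>" using PE by simp
    then show "let k = nat \<lceil>(1 / \<gamma>) * ln (1 / \<delta>)\<rceil> in
            measure_pmf.prob (Pi_pmf {..<k} {} (\<lambda>_. subset_pmf (hc TYPE('d) n) S))
              {g. \<exists>i<k. \<not> coverable n B (g i)} \<ge> 1 - \<delta>"
      unfolding Let_def k_def[symmetric] PP_def E_def p_def h_def .
  qed
qed

end
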